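(* Let $a,b,x\ge0$ be integers and $p\in[0,1]$, $q=1-p$. If all transition probabilities $p(r,s)$, $r,s>0$, equal $p$, then $$B(a,b,x)=\sum_{t=0}^{x}\binom{a+b+x}{a+t}p^{a+t}q^{b+x-t}.$$
   Context: Constrained walks: let $p(r,s)\in[0,1]$ be given for all integers $r,s>0$. A walker at a lattice point $(r,s)$ with $r,s>0$ moves West to $(r-1,s)$ with probability $p(r,s)$ and South to $(r,s-1)$ with probability $1-p(r,s)$, independently of the past; a walker at a point $(r,0)$ with $r>0$ always moves West, and a walker at $(0,s)$ with $s>0$ always moves South, until the origin is reached. Two walkers $U$ and $L$ start at $(a,b+x+1)$ and $(a+x+1,b)$ respectively and move simultaneously and independently, one step per time unit. $B(a,b,x)$ is the probability that the first time the two walkers occupy the same lattice point is when they both reach the origin. *)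

theory Defs
  imports "HOL-Probability.Probability"
begin

definition walk_step :: "(nat \<Rightarrow> nat \<Rightarrow> real) \<Rightarrow> nat \<times> nat \<Rightarrow> (nat \<times> nat) pmf" where
  "walk_step P z = (case z of (r, s) \<Rightarrow>
     if 0 < r \<and> 0 < s then
       map_pmf (\<lambda>w. if w then (r - 1, s) else (r, s - 1)) (bernoulli_pmf (P r s))
     else if 0 < r then return_pmf (r - 1, 0)
     else if 0 < s then return_pmf (0, s - 1)
     else return_pmf (0, 0))"

primrec walk_path :: "(nat \<Rightarrow> nat \<Rightarrow> real) \<Rightarrow> nat \<Rightarrow> nat \<times> nat \<Rightarrow> (nat \<times> nat) list pmf" where
  "walk_path P 0 z = return_pmf [z]"
| "walk_path P (Suc n) z = bind_pmf (walk_step P z) (\<lambda>z'. map_pmf (Cons z) (walk_path P n z'))"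

text \<open>B(a,b,x): walkers U from (a,b+x+1) and L from (a+x+1,b) move independently and
  simultaneously; both reach the origin at time n = a+b+x+1. B is the probability that they
  occupy distinct points at all times t < n (so the first common point is the origin).\<close>
definition B :: "(nat \<Rightarrow> nat \<Rightarrow> real) \<Rightarrow> nat \<Rightarrow> nat \<Rightarrow> nat \<Rightarrow> real" where
  "B P a b x = (let n = a + b + x + 1 in
     measure_pmf.prob (pair_pmf (walk_path P n (a, b + x + 1)) (walk_path P n (a + x + 1, b)))
       {(us, ls). \<forall>i<n. us ! i \<noteq> ls ! i})"

end

theory Submission
  imports Defs
begin


lemma prob_bind_pmf': "measure_pmf.prob (bind_pmf M f) A = (\<integral>x. measure_pmf.prob (f x) A \<partial>M)"
  unfolding measure_pmf_bind
  by (rule measure_pmf.measure_bind[where N="count_space UNIV"]) (auto simp: measure_pmf_in_subprob_algebra)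

definition D :: "(nat \<Rightarrow> nat \<Rightarrow> real) \<Rightarrow> nat \<Rightarrow> nat\<times>nat \<Rightarrow> nat\<times>nat \<Rightarrow> real" where
"D P n u l = measure_pmf.prob (pair_pmf (walk_path P n u) (walk_path P n l)) {(us, ls). \<forall>i<n. us ! i \<noteq> ls ! i}"

lemma pair_paths: "pair_pmf (walk_path P (Suc n) u) (walk_path P (Suc n) l) =
  bind_pmf (walk_step P u) (\<lambda>u'. bind_pmf (walk_step P l) (\<lambda>l'.
     map_pmf (\<lambda>(us,ls). (u#us, l#ls)) (pair_pmf (walk_path P n u') (walk_path P n l'))))"
  unfolding pair_pmf_def walk_path.simps map_pmf_def bind_assoc_pmf bind_return_pmf
  apply (subst bind_commute_pmf[of "walk_step P l"])
  apply (simp add: bind_assoc_pmf bind_return_pmf)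
  done

lemma vimage_ev: "(\<lambda>(us,ls). (u#us, l#ls)) -` {(us, ls). \<forall>i<Suc n. us ! i \<noteq> ls ! i}
   = (if u = l then {} else {(us, ls). \<forall>i<n. us ! i \<noteq> ls ! i})"
  by (auto simp: All_less_Suc2)


lemma D_Suc: "D P (Suc n) u l = (if u = l then 0 else \<integral>u'. \<integral>l'. D P n u' l' \<partial>walk_step P l \<partial>walk_step P u)"
  unfolding D_def pair_paths prob_bind_pmf' measure_map_pmf vimage_ev
  by (cases "u = l") simp_all

lemma D_0: "D P 0 u l = 1"
  unfolding D_def by simp

lemma int_step_in: "0<r \<Longrightarrow> 0<s \<Longrightarrow> 0 \<le> P r s \<Longrightarrow> P r s \<le> 1 \<Longrightarrow>
  (\<integral>z. f z \<partial>walk_step P (r,s)) = f (r-1,s) * P r s + f (r,s-1) * (1 - P r s)"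
  by (simp add: walk_step_def)
lemma int_step_r0: "0<s \<Longrightarrow> (\<integral>z. (f::nat\<times>nat\<Rightarrow>real) z \<partial>walk_step P (0,s)) = f (0,s-1)"
  by (simp add: walk_step_def)
lemma int_step_s0: "0<r \<Longrightarrow> (\<integral>z. (f::nat\<times>nat\<Rightarrow>real) z \<partial>walk_step P (r,0)) = f (r-1,0)"
  by (simp add: walk_step_def)

definition cc :: "real \<Rightarrow> nat \<Rightarrow> nat \<Rightarrow> real" where
  "cc p N k = real (N choose k) * p ^ k * (1 - p) ^ (N - k)"
definition KK :: "real \<Rightarrow> nat \<Rightarrow> nat \<Rightarrow> real" where
  "KK p N m = (\<Sum>k<m. cc p N k)"

lemma KK0[simp]: "KK p N 0 = 0" by (simp add: KK_def)
lemma cc_big: "N < k \<Longrightarrow> cc p N k = 0" by (simp add: cc_def)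
lemma cc_pascal: "cc p (Suc N) (Suc k) = p * cc p N k + (1-p) * cc p N (Suc k)"
proof (cases "k < N")
  case True
  then obtain d where d: "N = Suc (k + d)" using less_imp_Suc_add by blast
  have "cc p (Suc N) (Suc k) = (real (N choose k) + real (N choose Suc k)) * p ^ Suc k * (1-p) ^ (N - k)"
    unfolding cc_def by simp
  moreover have "N - k = Suc (N - Suc k)" using d by simp
  ultimately show ?thesis unfolding cc_def
    by (simp add: algebra_simps)
next
  case False
  show ?thesis
  proof (cases "k = N")
    case True
    then show ?thesis by (simp add: cc_def)
  next
    case False
    with \<open>\<not> k < N\<close> have "N < k" by simp
    then show ?thesis by (simp add: cc_def binomial_eq_0)
  qed
qed
lemma cc_0: "cc p (Suc N) 0 = (1-p) * cc p N 0" by (simp add: cc_def)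
lemma KK_pascal: "KK p (Suc N) (Suc m) = p * KK p N m + (1-p) * KK p N (Suc m)"
proof (induction m)
  case 0 then show ?case by (simp add: KK_def cc_0)
next
  case (Suc m)
  have "KK p (Suc N) (Suc (Suc m)) = KK p (Suc N) (Suc m) + cc p (Suc N) (Suc m)"
    by (simp add: KK_def)
  then show ?case using Suc by (simp add: KK_def cc_pascal algebra_simps)
qed
lemma KK_full: "KK p N (Suc N) = 1"
  unfolding KK_def cc_def using binomial_ring[of p "1-p" N]
  by (simp add: lessThan_Suc_atMost algebra_simps)
lemma KK_over: "KK p N (N + 2) = KK p N (Suc N)"
  by (simp add: KK_def cc_big)

lemma KK_diff: "(\<Sum>t=0..x. cc p N (a+t)) = KK p N (a+x+1) - KK p N a"
  by (induction x) (simp_all add: KK_def)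

lemma F_sum: "(\<Sum>t = 0..x. real ((a + b + x) choose (a + t)) * p ^ (a + t) * (1 - p) ^ (b + x - t))
   = KK p (a+b+x) (a+x+1) - KK p (a+b+x) a"
proof -
  have "(\<Sum>t = 0..x. real ((a + b + x) choose (a + t)) * p ^ (a + t) * (1 - p) ^ (b + x - t))
     = (\<Sum>t=0..x. cc p (a+b+x) (a+t))"
    by (rule sum.cong) (simp_all add: cc_def)
  then show ?thesis by (simp add: KK_diff)
qed

lemma D_same: "D P (Suc n) u u = 0" by (simp add: D_Suc)

lemma main_ind:
  assumes p0: "0 \<le> p" "p \<le> 1" and PP: "\<And>r s. 0<r \<Longrightarrow> 0<s \<Longrightarrow> P r s = p"
  shows "D P (a+b+x+1) (a, b+x+1) (a+x+1, b) = KK p (a+b+x) (a+x+1) - KK p (a+b+x) a"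
proof (induction "a+b+x" arbitrary: a b x rule: less_induct)
  case less
  have IH: "\<And>a' b' x' N u l. a'+b'+x' < a+b+x \<Longrightarrow> N = a'+b'+x'+1 \<Longrightarrow> u = (a', b'+x'+1) \<Longrightarrow> l = (a'+x'+1, b')
     \<Longrightarrow> D P N u l = KK p (a'+b'+x') (a'+x'+1) - KK p (a'+b'+x') a'"
    using less by blast
  have ST: "D P (a+b+x+1) (a, b+x+1) (a+x+1, b) =
     (\<integral>u'. \<integral>l'. D P (a+b+x) u' l' \<partial>walk_step P (a+x+1, b) \<partial>walk_step P (a, b+x+1))"
    using D_Suc[of P "a+b+x" "(a, b+x+1)" "(a+x+1, b)"] by simp
  show ?case
  proof (cases a)
    case 0
    note a = 0
    have U: "\<And>g::nat\<times>nat\<Rightarrow>real. (\<integral>z. g z \<partial>walk_step P (a, b+x+1)) = g (0, b+x)"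
      using int_step_r0[of "b+x+1"] a by simp
    show ?thesis
    proof (cases b)
      case 0
      note b = 0
      have L: "\<And>g::nat\<times>nat\<Rightarrow>real. (\<integral>z. g z \<partial>walk_step P (a+x+1, b)) = g (x, 0)"
        using int_step_s0[of "a+x+1"] a b by simp
      have "D P (a+b+x+1) (a, b+x+1) (a+x+1, b) = D P x (0,x) (x,0)"
        unfolding ST U L using a b by simp
      also have "\<dots> = 1"
      proof (cases x)
        case 0 then show ?thesis by (simp add: D_0)
      next
        case (Suc x')
        have "D P x (0,x) (x,0) = KK p (0+0+x') (0+x'+1) - KK p (0+0+x') 0"
          by (rule IH) (simp_all add: a b Suc)
        then show ?thesis using KK_full[of p x'] by simp
      qed
      also have "\<dots> = KK p (a+b+x) (a+x+1) - KK p (a+b+x) a"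
        using KK_full[of p x] a b by simp
      finally show ?thesis .
    next
      case (Suc b')
      note b = Suc
      have L: "\<And>g::nat\<times>nat\<Rightarrow>real. (\<integral>z. g z \<partial>walk_step P (a+x+1, b)) = g (x, b) * p + g (x+1, b') * (1-p)"
        using int_step_in[of "a+x+1" b P] a b PP[of "x+1" b] p0 by simp
      define M where "M = b'+x"
      have e1: "D P (a+b+x) (0,b+x) (x,b) = KK p M x"
      proof (cases x)
        case 0 then show ?thesis using D_same[of P b' "(0,b)"] a b by simp
      next
        case (Suc x')
        have "D P (a+b+x) (0,b+x) (x,b) = KK p (0+b+x') (0+x'+1) - KK p (0+b+x') 0"
          by (rule IH) (simp_all add: a b Suc)
        then show ?thesis by (simp add: M_def Suc b)
      qed
      have e2: "D P (a+b+x) (0,b+x) (x+1,b') = KK p (0+b'+x) (0+x+1) - KK p (0+b'+x) 0"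
        by (rule IH) (simp_all add: a b)
      have T: "KK p (a+b+x) (a+x+1) - KK p (a+b+x) a = p * KK p M x + (1-p) * KK p M (Suc x)"
        using KK_pascal[of p M x] by (simp add: a b M_def)
      show ?thesis
        unfolding ST U L T using e1 e2 by (simp add: M_def a)
    qed
  next
    case (Suc a')
    note a = Suc
    have U: "\<And>g::nat\<times>nat\<Rightarrow>real. (\<integral>z. g z \<partial>walk_step P (a, b+x+1)) = g (a', b+x+1) * p + g (a, b+x) * (1-p)"
      using int_step_in[of a "b+x+1" P] a PP[of a "b+x+1"] p0 by simp
    show ?thesis
    proof (cases b)
      case 0
      note b = 0
      have L: "\<And>g::nat\<times>nat\<Rightarrow>real. (\<integral>z. g z \<partial>walk_step P (a+x+1, b)) = g (a+x, 0)"
        using int_step_s0[of "a+x+1"] b by simp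
      define M where "M = a'+x"
      have e1: "D P (a+b+x) (a',b+x+1) (a+x,0) = KK p (a'+0+x) (a'+x+1) - KK p (a'+0+x) a'"
        by (rule IH) (simp_all add: a b)
      have e2: "D P (a+b+x) (a,b+x) (a+x,0) = KK p M (a'+x+1) - KK p M (Suc a')"
      proof (cases x)
        case 0 then show ?thesis using D_same[of P a' "(a,0)"] a b by simp
      next
        case (Suc x')
        have "D P (a+b+x) (a,b+x) (a+x,0) = KK p (a+0+x') (a+x'+1) - KK p (a+0+x') a"
          by (rule IH) (simp_all add: a b Suc)
        then show ?thesis by (simp add: M_def Suc a)
      qed
      have T: "KK p (a+b+x) (a+x+1) - KK p (a+b+x) a = p * KK p M (a'+x+1) + (1-p) * KK p M (a'+x+1) - p * KK p M a' - (1-p) * KK p M (Suc a')"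
        using KK_pascal[of p M "a'+x+1"] KK_pascal[of p M a'] KK_over[of p M] by (simp add: a b M_def)
      have e1': "D P (a+b+x) (a',b+x+1) (a+x,0) = KK p M (a'+x+1) - KK p M a'"
        using e1 by (simp add: M_def)
      show ?thesis
        unfolding ST U L T e1' e2 by (simp add: algebra_simps)
    next
      case (Suc b')
      note b = Suc
      have L: "\<And>g::nat\<times>nat\<Rightarrow>real. (\<integral>z. g z \<partial>walk_step P (a+x+1, b)) = g (a+x, b) * p + g (a+x+1, b') * (1-p)"
        using int_step_in[of "a+x+1" b P] b PP[of "a+x+1" b] p0 by simp
      define M where "M = a'+b+x"
      have e1: "D P (a+b+x) (a',b+x+1) (a+x,b) = KK p (a'+b+x) (a'+x+1) - KK p (a'+b+x) a'"
        by (rule IH) (simp_all add: a b)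
      have e2: "D P (a+b+x) (a',b+x+1) (a+x+1,b') = KK p (a'+b'+(x+1)) (a'+(x+1)+1) - KK p (a'+b'+(x+1)) a'"
        by (rule IH) (simp_all add: a b)
      have e3: "D P (a+b+x) (a,b+x) (a+x,b) = KK p M (a'+x+1) - KK p M (Suc a')"
      proof (cases x)
        case 0 then show ?thesis using D_same[of P "a'+b" "(a,b)"] a b by simp
      next
        case (Suc x')
        have "D P (a+b+x) (a,b+x) (a+x,b) = KK p (a+b+x') (a+x'+1) - KK p (a+b+x') a"
          by (rule IH) (simp_all add: a b Suc)
        then show ?thesis by (simp add: M_def Suc a)
      qed
      have e4: "D P (a+b+x) (a,b+x) (a+x+1,b') = KK p (a+b'+x) (a+x+1) - KK p (a+b'+x) a"
        by (rule IH) (simp_all add: a b)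
      have T: "KK p (a+b+x) (a+x+1) - KK p (a+b+x) a = p * KK p M (a'+x+1) + (1-p) * KK p M (a'+x+2) - p * KK p M a' - (1-p) * KK p M (Suc a')"
        using KK_pascal[of p M "a'+x+1"] KK_pascal[of p M a'] by (simp add: a b M_def)
      have e1': "D P (a+b+x) (a',b+x+1) (a+x,b) = KK p M (a'+x+1) - KK p M a'"
        using e1 by (simp add: M_def)
      have e2': "D P (a+b+x) (a',b+x+1) (a+x+1,b') = KK p M (a'+x+2) - KK p M a'"
        using e2 by (simp add: M_def b)
      have e4': "D P (a+b+x) (a,b+x) (a+x+1,b') = KK p M (a'+x+2) - KK p M (Suc a')"
        using e4 by (simp add: M_def a b)
      show ?thesis
        unfolding ST U L T e1' e2' e3 e4' by (simp add: algebra_simps)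
    qed
  qed
qed

theorem mainTheorem14:
  fixes P :: "nat \<Rightarrow> nat \<Rightarrow> real" and p :: real and a b x :: nat
  assumes "0 \<le> p" and "p \<le> 1"
    and "\<And>r s. 0 < r \<Longrightarrow> 0 < s \<Longrightarrow> P r s = p"
  shows "B P a b x = (\<Sum>t = 0..x. real ((a + b + x) choose (a + t)) * p ^ (a + t) * (1 - p) ^ (b + x - t))"
  unfolding F_sum B_def Let_def
  using main_ind[OF assms, where a=a and b=b and x=x] by (simp add: D_def)

end
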